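(* Let $m\ge 9$ be an integer and $g=\lceil\log_2 m\rceil$. For each integer $k$ with $m/g\le k\le m$, let $b_k$ be the number of integer sequences $0=x_0<x_1<\dots<x_k\le x_{k+1}=m$ such that $\max_{1\le i\le k+1}(x_i-x_{i-1})\le g$. Then for every real number $z\ge 2$, $$\Big(1-\big(\tfrac{2}{z+1}\big)^{g}\Big)(z+1)^m\le\sum_{k=\lceil m/g\rceil}^{m} b_k z^k\le (z+1)^m.$$ *)

theory Defs
  imports Complex_Main
begin

definition gval :: "nat \<Rightarrow> nat" where
  "gval m = nat \<lceil>log 2 (real m)\<rceil>"

definition seqs :: "nat \<Rightarrow> nat \<Rightarrow> nat \<Rightarrow> nat list set" where
  "seqs m g k = {xs. length xs = k + 2 \<and> xs ! 0 = 0 \<and> xs ! (k + 1) = m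
      \<and> (\<forall>i<k. xs ! i < xs ! (i + 1)) \<and> xs ! k \<le> xs ! (k + 1)
      \<and> (\<forall>i\<le>k. xs ! (i + 1) - xs ! i \<le> g)}"

definition bcount :: "nat \<Rightarrow> nat \<Rightarrow> nat" where
  "bcount m k = card (seqs m (gval m) k)"

end

theory Submission imports Defs begin

lemma seqs_upper:
  assumes "xs \<in> seqs m g k" shows "i \<le> k+1 \<Longrightarrow> xs!i \<le> i*g"
proof (induction i)
  case 0 then show ?case using assms by (simp add: seqs_def)
next
  case (Suc i)
  then have "xs!(i+1) - xs!i \<le> g" using assms by (simp add: seqs_def)
  then show ?case using Suc by simp
qed

lemma seqs_strict:
  assumes "xs \<in> seqs m g k" shows "i < j \<Longrightarrow> j \<le> k \<Longrightarrow> xs!i < xs!j"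
proof (induction j)
  case 0 then show ?case by simp
next
  case (Suc j)
  have "xs!j < xs!(j+1)" using assms Suc.prems by (simp add: seqs_def)
  then show ?case using Suc by (cases "i = j") auto
qed

lemma seqs_lower:
  assumes "xs \<in> seqs m g k" shows "d \<le> k+1 \<Longrightarrow> m - xs!(k+1-d) \<le> d*g"
proof (induction d)
  case 0 then show ?case using assms by (simp add: seqs_def)
next
  case (Suc d)
  have "xs!(k-d+1) - xs!(k-d) \<le> g" using assms Suc.prems by (simp add: seqs_def)
  moreover have "k+1-d = k-d+1" "k+1 - Suc d = k-d" using Suc.prems by auto
  ultimately show ?case using Suc by simp
qed


definition Lst :: "nat \<Rightarrow> nat set \<Rightarrow> nat list" where
  "Lst m S = 0 # sorted_list_of_set S @ [m]"

lemma Lst_props: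
  assumes S: "S \<subseteq> {1..m}" "card S = k"
  shows "length (Lst m S) = k+2" "Lst m S ! 0 = 0" "Lst m S ! (k+1) = m"
    "sorted (Lst m S)" "\<forall>i<k. Lst m S ! i < Lst m S ! (i+1)"
    "Lst m S ! k \<le> m" "\<And>t. t < k \<Longrightarrow> Lst m S ! (t+1) \<in> S"
    "S = {Lst m S ! (t+1) |t. t < k}" "\<And>s. s \<in> S \<Longrightarrow> \<exists>t<k. s = Lst m S ! (t+1)"
proof -
  have fin: "finite S" using S finite_subset by blast
  define ys where "ys = sorted_list_of_set S"
  have ys: "sorted_wrt (<) ys" "set ys = S" "length ys = k"
    using fin S by (auto simp: ys_def)
  have L: "Lst m S = 0 # ys @ [m]" by (simp add: Lst_def ys_def)
  have ysS: "\<forall>y\<in>set ys. 1 \<le> y \<and> y \<le> m" using ys S by auto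
  have sw: "sorted_wrt (<) (0 # ys)" using ys ysS by auto
  show "length (Lst m S) = k+2" using L ys by simp
  show "Lst m S ! 0 = 0" using L by simp
  show "Lst m S ! (k+1) = m" using L ys by (simp add: nth_append)
  show "sorted (Lst m S)" using L ys ysS by (auto simp: sorted_append strict_sorted_imp_sorted)
  have e: "\<And>i. i \<le> k \<Longrightarrow> Lst m S ! i = (0 # ys) ! i" using L ys
    by (simp add: nth_append del: append_Cons flip: append_Cons)
  show "\<forall>i<k. Lst m S ! i < Lst m S ! (i+1)"
  proof (intro allI impI)
    fix i assume "i < k"
    then have "(0 # ys) ! i < (0 # ys) ! (Suc i)" using sw ys
      using sorted_wrt_nth_less[OF sw, of i "Suc i"] by simp
    then show "Lst m S ! i < Lst m S ! (i+1)" using e \<open>i<k\<close> by simp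
  qed
  show "Lst m S ! k \<le> m"
  proof (cases k)
    case 0 then show ?thesis using e by simp
  next
    case (Suc t)
    then have "ys ! t \<in> set ys" using ys by (metis lessI nth_mem)
    then show ?thesis using e[of k] Suc ysS by auto
  qed
  have e2: "\<And>t. t < k \<Longrightarrow> Lst m S ! (t+1) = ys ! t" using e by simp
  show "\<And>t. t < k \<Longrightarrow> Lst m S ! (t+1) \<in> S" using e2 ys by auto
  show "S = {Lst m S ! (t+1) |t. t < k}"
    using e2 ys by (auto simp: in_set_conv_nth) (metis Suc_eq_plus1)
  show "\<And>s. s \<in> S \<Longrightarrow> \<exists>t<k. s = Lst m S ! (t+1)"
    using e2 ys by (metis in_set_conv_nth)
qed


lemma seqs_in_image:
  assumes xs: "xs \<in> seqs m g k"
  defines "S \<equiv> {xs!(t+1) |t. t < k}"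
  shows "S \<subseteq> {1..m}" "card S = k" "Lst m S = xs"
proof -
  define zs where "zs = map (\<lambda>t. xs!(t+1)) [0..<k]"
  have len: "length xs = k+2" "xs!0 = 0" "xs!(k+1) = m" "xs!k \<le> m" using xs by (auto simp: seqs_def)
  have zs_s: "sorted_wrt (<) zs" unfolding zs_def sorted_wrt_iff_nth_less
    using seqs_strict[OF xs] by auto
  have setzs: "set zs = S" unfolding zs_def S_def by auto
  have lenzs: "length zs = k" by (simp add: zs_def)
  show "card S = k" using zs_s setzs lenzs
    by (metis distinct_card strict_sorted_iff)
  show "S \<subseteq> {1..m}"
  proof
    fix s assume "s \<in> S"
    then obtain t where t: "t < k" "s = xs!(t+1)" unfolding S_def by auto
    have "xs!0 < xs!(t+1)" using seqs_strict[OF xs, of 0 "t+1"] t by simp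
    moreover have "xs!(t+1) \<le> xs!k"
      using seqs_strict[OF xs, of "t+1" k] t by (cases "t+1 = k") auto
    ultimately show "s \<in> {1..m}" using t len by auto
  qed
  have fin: "finite S" unfolding S_def by simp
  have "sorted_list_of_set S = zs"
    using strict_sorted_equal[OF zs_s, of "sorted_list_of_set S"] fin setzs by simp
  then have L: "Lst m S = 0 # zs @ [m]" by (simp add: Lst_def)
  show "Lst m S = xs"
  proof (rule nth_equalityI)
    show "length (Lst m S) = length xs" using L len lenzs by simp
    fix i assume "i < length (Lst m S)"
    then have i: "i < k+2" using L lenzs by simp
    show "Lst m S ! i = xs ! i"
    proof (cases i)
      case 0 then show ?thesis using L len by simp
    next
      case (Suc t)
      show ?thesis
      proof (cases "t < k")
        case True then show ?thesis using L Suc lenzs by (simp add: nth_append zs_def)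
      next
        case False then have "t = k" using i Suc by simp
        then show ?thesis using L Suc lenzs len by (simp add: nth_append)
      qed
    qed
  qed
qed

lemma bcount_le: "card (seqs m g k) \<le> m choose k"
proof -
  define All where "All = {S. S \<subseteq> {1..m} \<and> card S = k}"
  have "seqs m g k \<subseteq> Lst m ` All"
  proof
    fix xs assume xs: "xs \<in> seqs m g k"
    show "xs \<in> Lst m ` All" using seqs_in_image[OF xs] unfolding All_def
      by (metis (mono_tags, lifting) image_eqI mem_Collect_eq)
  qed
  then have "card (seqs m g k) \<le> card (Lst m ` All)"
    by (intro card_mono) (auto simp: All_def)
  also have "\<dots> \<le> card All" by (rule card_image_le) (simp add: All_def)
  also have "\<dots> = m choose k" unfolding All_def using n_subsets[of "{1..m}" k] by simp
  finally show ?thesis .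
qed


lemma bad_block:
  assumes S: "S \<subseteq> {1..m}" "card S = k" and nots: "Lst m S \<notin> seqs m g k"
  shows "\<exists>j\<in>{0..m-g}. S \<subseteq> {1..m} - {j+1..j+g}"
proof -
  note P = Lst_props[OF S]
  let ?L = "Lst m S"
  obtain i where i: "i \<le> k" "?L!(i+1) - ?L!i > g"
    using nots P(1-3,5,6) unfolding seqs_def by (simp add: not_le) blast
  have srt: "\<And>a b. a \<le> b \<Longrightarrow> b \<le> k+1 \<Longrightarrow> ?L!a \<le> ?L!b"
    using P(4) P(1) by (intro sorted_nth_mono) auto
  define j where "j = ?L!i"
  have "?L!(i+1) \<le> m" using srt[of "i+1" "k+1"] i P(3) by simp
  have jg: "j + g \<le> m" using i j_def \<open>?L!(i+1) \<le> m\<close> by linarith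
  have "S \<inter> {j+1..j+g} = {}"
  proof (rule ccontr)
    assume "S \<inter> {j+1..j+g} \<noteq> {}"
    then obtain s where s: "s \<in> S" "s \<in> {j+1..j+g}" by blast
    then have s': "j < s" "s \<le> j+g" by auto
    obtain t where t: "t < k" "s = ?L!(t+1)" using P(9)[OF s(1)] by blast
    show False
    proof (cases "t+1 \<le> i")
      case True then show False using srt[of "t+1" i] i s s' t j_def by simp
    next
      case False then have "?L!(i+1) \<le> ?L!(t+1)" using srt[of "i+1" "t+1"] t by simp
      then show False using i s' t j_def by simp
    qed
  qed
  then have "S \<subseteq> {1..m} - {j+1..j+g}" using S by blast
  moreover have "j \<in> {0..m-g}" using jg by simp
  ultimately show ?thesis by blast
qed

lemma finite_seqs: "finite (seqs m g k)"
proof -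
  have "seqs m g k \<subseteq> Lst m ` {S. S \<subseteq> {1..m} \<and> card S = k}"
  proof
    fix xs assume xs: "xs \<in> seqs m g k"
    show "xs \<in> Lst m ` {S. S \<subseteq> {1..m} \<and> card S = k}"
    proof (rule image_eqI)
      show "xs = Lst m {xs!(t+1) |t. t < k}" using seqs_in_image(3)[OF xs] by simp
      show "{xs!(t+1) |t. t < k} \<in> {S. S \<subseteq> {1..m} \<and> card S = k}"
        using seqs_in_image(1,2)[OF xs] by (simp only: mem_Collect_eq)
    qed
  qed
  then show ?thesis by (rule finite_subset) simp
qed

lemma bcount_ge:
  assumes "g \<le> m"
  shows "m choose k \<le> card (seqs m g k) + (m-g+1) * ((m-g) choose k)"
proof -
  define All where "All = {S. S \<subseteq> {1..m} \<and> card S = k}"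
  define Good where "Good = {S \<in> All. Lst m S \<in> seqs m g k}"
  define B where "B j = {S. S \<subseteq> {1..m} - {j+1..j+g} \<and> card S = k}" for j
  have finAll: "finite All" unfolding All_def by simp
  have "inj_on (Lst m) Good"
  proof (rule inj_onI)
    fix S T assume "S \<in> Good" "T \<in> Good" "Lst m S = Lst m T"
    then have a: "S \<subseteq> {1..m}" "card S = k" "T \<subseteq> {1..m}" "card T = k" and eq: "Lst m S = Lst m T"
      unfolding Good_def All_def by auto
    have 1: "S = {Lst m S ! (t+1) |t. t<k}" by (rule Lst_props(8)[OF a(1,2)])
    have 2: "T = {Lst m T ! (t+1) |t. t<k}" by (rule Lst_props(8)[OF a(3,4)])
    from 1 have "S = {Lst m T ! (t+1) |t. t<k}" unfolding eq .
    then show "S = T" by (rule trans[OF _ 2[symmetric]])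
  qed
  then have "card Good = card (Lst m ` Good)" by (simp add: card_image)
  also have "\<dots> \<le> card (seqs m g k)"
    by (intro card_mono finite_seqs) (auto simp: Good_def)
  finally have cG: "card Good \<le> card (seqs m g k)" .
  have sub: "All - Good \<subseteq> (\<Union>j\<in>{0..m-g}. B j)"
  proof
    fix S assume "S \<in> All - Good"
    then have "S \<subseteq> {1..m}" "card S = k" "Lst m S \<notin> seqs m g k"
      unfolding All_def Good_def by auto
    from bad_block[OF this] show "S \<in> (\<Union>j\<in>{0..m-g}. B j)"
      unfolding B_def using \<open>card S = k\<close> by blast
  qed
  have cB: "card (B j) = (m-g) choose k" if "j \<in> {0..m-g}" for j
  proof -
    have "card ({1..m} - {j+1..j+g}) = m - g"
      using that assms by (subst card_Diff_subset) auto
    then show ?thesis unfolding B_def using n_subsets[of "{1..m} - {j+1..j+g}" k] by simp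
  qed
  have "card (All - Good) \<le> card (\<Union>j\<in>{0..m-g}. B j)"
    by (intro card_mono[OF _ sub]) (auto simp: B_def)
  also have "\<dots> \<le> (\<Sum>j\<in>{0..m-g}. card (B j))" by (rule card_UN_le) simp
  also have "\<dots> = (m-g+1) * ((m-g) choose k)" using cB by simp
  finally have cD: "card (All - Good) \<le> (m-g+1) * ((m-g) choose k)" .
  have "m choose k = card All" unfolding All_def using n_subsets[of "{1..m}" k] by simp
  also have "\<dots> = card Good + card (All - Good)"
  proof -
    have "Good \<subseteq> All" unfolding Good_def by auto
    then show ?thesis using finAll by (metis card_Diff_subset card_mono finite_subset le_add_diff_inverse)
  qed
  finally show ?thesis using cG cD by linarith
qed


lemma gval_facts:
  assumes "m \<ge> 9"
  shows "4 \<le> gval m" "2^(gval m - 1) < m" "m \<le> 2^gval m"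
proof -
  define r where "r = log 2 (real m)"
  have m0: "real m > 0" using assms by simp
  have "3 < r" unfolding r_def using assms
    by (subst less_log_iff) (auto simp: powr_realpow)
  then have c4: "\<lceil>r\<rceil> \<ge> 4" by linarith
  have gr: "real (gval m) = of_int \<lceil>r\<rceil>" unfolding gval_def r_def[symmetric] using c4 by simp
  have gi: "int (gval m) = \<lceil>r\<rceil>" unfolding gval_def r_def[symmetric] using c4 by simp
  show "4 \<le> gval m" using gi c4 by linarith
  have "r \<le> real (gval m)" using gr by linarith
  then have "real m \<le> 2 powr real (gval m)" unfolding r_def using m0 by (subst (asm) log_le_iff) auto
  then have "real m \<le> real (2 ^ gval m)" by (simp add: powr_realpow)
  then show "m \<le> 2^gval m" by linarith
  have "real (gval m - 1) < r" using gr gi c4 by (simp add: of_nat_diff) linarith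
  then have "2 powr real (gval m - 1) < real m" unfolding r_def using m0 by (subst (asm) less_log_iff) auto
  then have "real (2 ^ (gval m - 1)) < real m" by (simp add: powr_realpow)
  then show "2^(gval m - 1) < m" by linarith
qed

lemma pow2_lin: "n \<ge> 3 \<Longrightarrow> 4*n \<le> 2^n + (4::nat)"
proof (induction n rule: dec_induct)
  case base then show ?case by simp
next
  case (step n)
  have "(2::nat)^2 \<le> 2^n" using step(1) by (intro power_increasing) auto
  then have "(4::nat) \<le> 2^n" by simp
  then show ?case using step by simp
qed

lemma sq_le_pow2: "n \<ge> 4 \<Longrightarrow> n^2 \<le> (2::nat)^n"
proof (induction n rule: dec_induct)
  case base then show ?case by simp
next
  case (step n)
  have "(Suc n)^2 = n^2 + 2*n + 1" by (simp add: power2_eq_square)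
  also have "\<dots> \<le> 2 * n^2"
  proof -
    have "4*n \<le> n*n" using step(1) by (intro mult_le_mono1) simp
    then show ?thesis using step(1) unfolding power2_eq_square by linarith
  qed
  also have "\<dots> \<le> 2 * 2^n" using step by simp
  finally show ?case by simp
qed


lemma cval:
  assumes "g \<ge> 1" "m \<ge> 1"
  defines "c \<equiv> nat \<lceil>real m / real g\<rceil>"
  shows "m \<le> c*g" "(c-1)*g < m" "1 \<le> c" "c \<le> m"
proof -
  have pos: "real m / real g > 0" using assms by simp
  have c1: "real m / real g \<le> of_int \<lceil>real m / real g\<rceil>" by (rule le_of_int_ceiling)
  have c2: "of_int \<lceil>real m / real g\<rceil> < real m / real g + 1" using ceiling_correct[of "real m / real g"] by linarith
  have ci: "of_int \<lceil>real m / real g\<rceil> = real c" unfolding c_def using pos by simp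
  have g0: "real g > 0" using assms by simp
  have "real m \<le> real c * real g" using c1 ci g0 by (simp add: divide_le_eq)
  then show "m \<le> c*g" by (simp flip: of_nat_mult)
  have "real c - 1 < real m / real g" using c2 ci by simp
  then have "(real c - 1) * real g < real m" using g0 by (simp add: less_divide_eq)
  moreover have "c \<ge> 1"
  proof (rule ccontr)
    assume "\<not> c \<ge> 1" then have "c = 0" by simp
    then show False using \<open>real m \<le> real c * real g\<close> assms(2) by simp
  qed
  ultimately have "real ((c-1)*g) < real m" by (simp add: of_nat_diff)
  then show "(c-1)*g < m" by linarith
  show "1 \<le> c" by fact
  have "real m / real g \<le> real m" using assms by (simp add: divide_le_eq)
  then have "\<lceil>real m / real g\<rceil> \<le> int m" by (intro ceiling_le) simp
  then show "c \<le> m" unfolding c_def by (simp only: nat_le_iff)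
qed

lemma seqs_len_bound: "xs \<in> seqs m g k \<Longrightarrow> m \<le> (k+1)*g"
  using seqs_upper[of xs m g k "k+1"] by (simp add: seqs_def)

lemma card_seqs_min:
  assumes jg: "j*g < m"
  shows "card (seqs m g j) \<le> g^j"
proof -
  define f where "f xs = map (\<lambda>i. xs!(i+1) - (i*g+1)) [0..<j]" for xs :: "nat list"
  have bnd: "i*g < xs!(i+1) \<and> xs!(i+1) \<le> i*g + g" if xs: "xs \<in> seqs m g j" and i: "i < j" for xs i
  proof -
    have u: "xs!(i+1) \<le> (i+1)*g" using seqs_upper[OF xs, of "i+1"] i by simp
    have l: "m - xs!(j+1-(j-i)) \<le> (j-i)*g" using seqs_lower[OF xs, of "j-i"] i by simp
    have "j+1-(j-i) = i+1" using i by simp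
    with l have l2: "m \<le> xs!(i+1) + (j-i)*g" by simp
    have "(j-i)*g + i*g = j*g" using i by (simp flip: add_mult_distrib)
    then show ?thesis using u l2 jg by simp
  qed
  have "inj_on f (seqs m g j)"
  proof (rule inj_onI)
    fix xs ys assume xs: "xs \<in> seqs m g j" and ys: "ys \<in> seqs m g j" and eq: "f xs = f ys"
    have mid: "xs!(i+1) = ys!(i+1)" if i: "i < j" for i
    proof -
      have "f xs ! i = f ys ! i" using eq by simp
      then have "xs!(i+1) - (i*g+1) = ys!(i+1) - (i*g+1)" using i by (simp add: f_def)
      then show ?thesis using bnd[OF xs i] bnd[OF ys i] by linarith
    qed
    have lx: "length xs = j+2" "xs!0 = 0" "xs!(j+1) = m" using xs by (auto simp: seqs_def)
    have ly: "length ys = j+2" "ys!0 = 0" "ys!(j+1) = m" using ys by (auto simp: seqs_def)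
    show "xs = ys"
    proof (rule nth_equalityI)
      show "length xs = length ys" using lx ly by simp
      fix i assume "i < length xs"
      then have "i < j + 2" using lx by simp
      show "xs!i = ys!i"
      proof (cases i)
        case 0 then show ?thesis using lx ly by simp
      next
        case (Suc t)
        show ?thesis
        proof (cases "t < j")
          case True then show ?thesis using mid[of t] Suc by simp
        next
          case False then have "i = j+1" using Suc \<open>i < j+2\<close> by simp
          then show ?thesis using lx ly by simp
        qed
      qed
    qed
  qed
  moreover have "f ` seqs m g j \<subseteq> {zs. set zs \<subseteq> {..<g} \<and> length zs = j}"
  proof
    fix zs assume "zs \<in> f ` seqs m g j"
    then obtain xs where xs: "xs \<in> seqs m g j" and z: "zs = f xs" by blast
    have "\<forall>i<j. xs!(i+1) - (i*g+1) < g"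
    proof (intro allI impI)
      fix i assume "i < j" from bnd[OF xs this] show "xs!(i+1) - (i*g+1) < g" by linarith
    qed
    then show "zs \<in> {zs. set zs \<subseteq> {..<g} \<and> length zs = j}"
      unfolding z f_def by auto
  qed
  ultimately have "card (seqs m g j) \<le> card {zs. set zs \<subseteq> {..<g} \<and> length zs = j}"
    by (intro card_inj_on_le) (auto simp: finite_lists_length_eq)
  also have "\<dots> = g^j" by (simp add: card_lists_length_eq)
  finally show ?thesis .
qed

lemma nat_ineq:
  fixes g j m :: nat
  assumes g4: "4 \<le> g" and jg: "j*g < m" and gm: "4*g \<le> m+7"
  shows "g + j \<le> m" "g^j \<le> 3^(m-g-j+1)"
proof -
  define P where "P = j*g"
  have P1: "4*j \<le> P" unfolding P_def using g4 by simp
  have P2: "P < m" using jg P_def by simp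
  show gj: "g + j \<le> m" using P1 P2 gm g4 by linarith
  define e where "e = m-g-j+1"
  have ee: "e + g + j = m + 1" unfolding e_def using gj by simp
  have Pe: "P \<le> 3*e" using P1 P2 gm ee by linarith
  have "(g^j)^2 = (g^2)^j" by (simp flip: power_mult add: mult.commute)
  also have "\<dots> \<le> (2^g)^j" by (intro power_mono sq_le_pow2 g4) simp
  also have "\<dots> = 2^P" unfolding P_def by (simp flip: power_mult add: mult.commute)
  also have "\<dots> \<le> 2^(3*e)" using Pe by (intro power_increasing) auto
  also have "\<dots> = 8^e" by (simp add: power_mult)
  also have "\<dots> \<le> 9^e" by (intro power_mono) auto
  also have "\<dots> = ((3::nat)^2)^e" by simp
  also have "\<dots> = (3^e)^2" by (simp only: power_mult[symmetric] mult.commute)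
  finally have "(g^j)^2 \<le> (3^e)^2" .
  then have "g^j \<le> 3^e" by (rule power2_le_imp_le) simp
  then show "g^j \<le> 3^(m-g-j+1)" unfolding e_def .
qed


lemma bin_ext:
  fixes z :: real
  assumes "n \<le> N"
  shows "(\<Sum>k\<le>N. real (n choose k) * z^k) = (z+1)^n"
proof -
  have "(z+1)^n = (\<Sum>k\<le>n. real (n choose k) * z^k)"
    using binomial_ring[of z 1 n] by simp
  also have "\<dots> = (\<Sum>k\<le>N. real (n choose k) * z^k)"
    using assms by (intro sum.mono_neutral_left) auto
  finally show ?thesis by simp
qed

theorem mainTheorem13:
  fixes m :: nat and z :: real
  assumes "m \<ge> 9" and "z \<ge> 2"
  shows "(1 - (2 / (z + 1)) ^ gval m) * (z + 1) ^ m
           \<le> (\<Sum>k = nat \<lceil>real m / real (gval m)\<rceil>..m. real (bcount m k) * z ^ k)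
       \<and> (\<Sum>k = nat \<lceil>real m / real (gval m)\<rceil>..m. real (bcount m k) * z ^ k)
           \<le> (z + 1) ^ m"
proof -
  define g where "g = gval m"
  define c where "c = nat \<lceil>real m / real g\<rceil>"
  define b where "b k = real (bcount m k)" for k
  have g4: "4 \<le> g" and g1: "2^(g-1) < m" and g2: "m \<le> 2^g"
    using gval_facts[OF assms(1)] unfolding g_def by auto
  have "4*(g-1) \<le> 2^(g-1) + 4" using g4 by (intro pow2_lin) simp
  then have gm: "4*g \<le> m+7" using g1 g4 by linarith
  have cf: "m \<le> c*g" "(c-1)*g < m" "1 \<le> c" "c \<le> m"
    using cval[of g m] g4 assms(1) unfolding c_def by auto
  define j where "j = c - 1"
  have cj: "c = Suc j" using cf(3) unfolding j_def by simp
  have jg: "j*g < m" using cf(2) unfolding j_def by simp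
  have bdef: "b k = real (card (seqs m g k))" for k unfolding b_def bcount_def g_def by simp
  have b0: "b k = 0" if "k < j" for k
  proof -
    have "seqs m g k = {}"
    proof (rule ccontr)
      assume "seqs m g k \<noteq> {}"
      then obtain xs where "xs \<in> seqs m g k" by blast
      then have "m \<le> (k+1)*g" by (rule seqs_len_bound)
      moreover have "(k+1)*g \<le> j*g" using that by (intro mult_le_mono1) simp
      ultimately show False using jg by simp
    qed
    then show ?thesis using bdef by simp
  qed
  have bup: "b k \<le> real (m choose k)" for k using bdef bcount_le[of m g k] by simp
  have blow: "real (m choose k) - real (m-g+1) * real ((m-g) choose k) \<le> b k" for k
  proof -
    have "m choose k \<le> card (seqs m g k) + (m-g+1) * ((m-g) choose k)"
      using bcount_ge[of g m k] gm g4 by simp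
    then have "real (m choose k) \<le> real (card (seqs m g k)) + real (m-g+1) * real ((m-g) choose k)"
      by (metis of_nat_add of_nat_le_iff of_nat_mult)
    then show ?thesis using bdef by simp
  qed
  have z0: "z \<ge> 0" using assms by simp
  have ni: "g + j \<le> m" "g^j \<le> 3^(m-g-j+1)" using nat_ineq[OF g4 jg gm] by auto
  have bj: "b j * z^j \<le> real (g-1) * (z+1)^(m-g)"
  proof -
    have "b j \<le> real (g^j)" using bdef card_seqs_min[OF jg] by simp
    also have "\<dots> \<le> real (3^(m-g-j+1))" using ni by linarith
    also have "\<dots> = 3 * 3^(m-g-j)" by simp
    also have "\<dots> \<le> real (g-1) * 3^(m-g-j)" using g4 by (intro mult_right_mono) auto
    finally have 1: "b j \<le> real (g-1) * 3^(m-g-j)" .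
    have "b j * z^j \<le> real (g-1) * 3^(m-g-j) * z^j" using 1 z0 by (intro mult_right_mono) auto
    also have "\<dots> \<le> real (g-1) * (z+1)^(m-g-j) * (z+1)^j"
      using assms z0 by (intro mult_mono power_mono mult_left_mono) auto
    also have "\<dots> = real (g-1) * (z+1)^(m-g)"
      using ni by (simp add: mult.assoc flip: power_add)
    finally show ?thesis .
  qed
  have split: "(\<Sum>k\<le>m. b k * z^k) = (\<Sum>k<c. b k * z^k) + (\<Sum>k=c..m. b k * z^k)"
  proof -
    have "{..m} = {..<c} \<union> {c..m}" using cf by auto
    then show ?thesis by (simp add: sum.union_disjoint ivl_disj_int)
  qed
  have small: "(\<Sum>k<c. b k * z^k) = b j * z^j"
    using b0 unfolding cj by simp
  have full_low: "(z+1)^m - real (m-g+1) * (z+1)^(m-g) \<le> (\<Sum>k\<le>m. b k * z^k)"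
  proof -
    have "(z+1)^m - real (m-g+1) * (z+1)^(m-g)
        = (\<Sum>k\<le>m. (real (m choose k) - real (m-g+1) * real ((m-g) choose k)) * z^k)"
    proof -
      have "(\<Sum>k\<le>m. (real (m choose k) - real (m-g+1) * real ((m-g) choose k)) * z^k)
          = (\<Sum>k\<le>m. real (m choose k) * z^k) - real (m-g+1) * (\<Sum>k\<le>m. real ((m-g) choose k) * z^k)"
        by (simp add: left_diff_distrib sum_subtractf sum_distrib_left mult.assoc)
      then show ?thesis using bin_ext[of m m z] bin_ext[of "m-g" m z] by simp
    qed
    also have "\<dots> \<le> (\<Sum>k\<le>m. b k * z^k)"
      using blow z0 by (intro sum_mono mult_right_mono) auto
    finally show ?thesis .
  qed
  have upper: "(\<Sum>k=c..m. b k * z^k) \<le> (z+1)^m"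
  proof -
    have "(\<Sum>k=c..m. b k * z^k) \<le> (\<Sum>k=c..m. real (m choose k) * z^k)"
      using bup z0 by (intro sum_mono mult_right_mono) auto
    also have "\<dots> \<le> (\<Sum>k\<le>m. real (m choose k) * z^k)"
      using z0 by (intro sum_mono2) auto
    also have "\<dots> = (z+1)^m" using bin_ext[of m m z] by simp
    finally show ?thesis .
  qed
  have gmm: "g \<le> m" using ni by simp
  have lhs: "(1 - (2 / (z + 1)) ^ g) * (z + 1) ^ m = (z+1)^m - 2^g * (z+1)^(m-g)"
  proof -
    have "(z+1)^m = (z+1)^g * (z+1)^(m-g)" using gmm by (simp flip: power_add)
    moreover have "(2 / (z + 1)) ^ g * (z+1)^g = 2^g" using z0 by (simp add: power_divide)
    ultimately show ?thesis by (simp add: algebra_simps)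
  qed
  have "(z+1)^m - 2^g * (z+1)^(m-g) \<le> (z+1)^m - real m * (z+1)^(m-g)"
  proof -
    have "real m \<le> 2^g" using g2 by (metis of_nat_le_iff of_nat_numeral of_nat_power)
    then show ?thesis using z0 by (intro diff_left_mono mult_right_mono) auto
  qed
  also have "\<dots> = (z+1)^m - real (m-g+1) * (z+1)^(m-g) - real (g-1) * (z+1)^(m-g)"
    using gmm g4 by (simp add: of_nat_diff algebra_simps)
  also have "\<dots> \<le> (\<Sum>k=c..m. b k * z^k)"
    using full_low split small bj by linarith
  finally have lower: "(1 - (2 / (z + 1)) ^ g) * (z + 1) ^ m \<le> (\<Sum>k=c..m. b k * z^k)"
    using lhs by simp
  show ?thesis using lower upper unfolding b_def c_def g_def by simp
qed

end
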